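(* Let $m\ge 2$ and let $A=(a_{ij})$, $B=(b_{ij})$ be real $m\times m$ matrices with $0\le a_{ij},b_{ij}\le 1$ for all $i,j$, $\det(A)=\det(B)=0$, $AB^T=\mathbf{1}$ (the $m\times m$ all-ones matrix), and such that neither $A$ nor $B$ has all of its rows identical. Let $V:S^{m-1}\to S^{m-1}$ be given by $(V(x))_k=\big(\sum_{i=1}^m a_{ik}x_i\big)\big(\sum_{j=1}^m b_{jk}x_j\big)$, $k=1,\dots,m$. Let $C=(c_{ij})$ be a real $m\times m$ matrix with $c_{ij}\ge 0$ for all $i,j$, and for $k=1,\dots,m$ let $c^{(k)}=(c_{1k},c_{2k},\dots,c_{mk})^T$; suppose that for every $k=1,\dots,m$ either $Ac^{(k)}\le c^{(k)}$ or $Bc^{(k)}\le c^{(k)}$ (componentwise). Then for any $p_1,\dots,p_m\in\mathbb{R}^+$ the function $$\phi(x)=\prod_{k=1}^m\Big(\sum_{i=1}^m c_{ik}x_i\Big)^{p_k}$$ is a Lyapunov function for $V$, i.e. $\lim_{n\to\infty}\phi(x^{(n)})$ exists for every $x^{(0)}\in S^{m-1}$, where $x^{(n+1)}=V(x^{(n)})$.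
   Context: $S^{m-1}=\{x\in\mathbb{R}^m: x_i\ge 0,\ \sum_i x_i=1\}$. A continuous function $\phi:S^{m-1}\to\mathbb{R}$ is a Lyapunov function for $V$ if $\lim_{n\to\infty}\phi(x^{(n)})$ exists for every initial point $x^{(0)}\in S^{m-1}$ with $x^{(n+1)}=V(x^{(n)})$. *)

theory Defs
  imports "HOL-Analysis.Analysis"
begin

definition std_simplex :: "(real^'m) set" where
  "std_simplex = {x. (\<forall>i. 0 \<le> x $ i) \<and> (\<Sum>i\<in>UNIV. x $ i) = 1}"

definition lyapunov_fun :: "('a::topological_space \<Rightarrow> real) \<Rightarrow> ('a \<Rightarrow> 'a) \<Rightarrow> 'a set \<Rightarrow> bool" where
  "lyapunov_fun \<phi> V S \<longleftrightarrow>
     continuous_on S \<phi> \<and> (\<forall>x0\<in>S. convergent (\<lambda>n. \<phi> ((V ^^ n) x0)))"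

end

theory Submission
  imports Defs
begin

lemma simplex_bounds:
  fixes M :: "real^'m^'m" and x :: "real^'m"
  assumes "x \<in> std_simplex" "\<forall>i j. 0 \<le> M $ i $ j \<and> M $ i $ j \<le> 1"
  shows "0 \<le> (\<Sum>i\<in>UNIV. M $ i $ k * x $ i) \<and> (\<Sum>i\<in>UNIV. M $ i $ k * x $ i) \<le> 1"
proof -
  have x0: "\<forall>i. 0 \<le> x $ i" and x1: "(\<Sum>i\<in>UNIV. x $ i) = 1" using assms(1) by (auto simp: std_simplex_def)
  have "(\<Sum>i\<in>UNIV. M $ i $ k * x $ i) \<le> (\<Sum>i\<in>UNIV. x $ i)"
    by (rule sum_mono) (metis assms(2) x0 mult_right_mono mult_1_left)
  moreover have "0 \<le> (\<Sum>i\<in>UNIV. M $ i $ k * x $ i)"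
    by (rule sum_nonneg) (simp add: assms(2) x0)
  ultimately show ?thesis using x1 by simp
qed

theorem corollary3p2:
  fixes A B C :: "real^'m^'m" and p :: "real^'m" and V :: "real^'m \<Rightarrow> real^'m"
  assumes "CARD('m) \<ge> 2"
    and "\<forall>i j. 0 \<le> A $ i $ j \<and> A $ i $ j \<le> 1"
    and "\<forall>i j. 0 \<le> B $ i $ j \<and> B $ i $ j \<le> 1"
    and "det A = 0" and "det B = 0"
    and "A ** transpose B = (\<chi> i j. 1)"
    and "\<exists>i j. row i A \<noteq> row j A"
    and "\<exists>i j. row i B \<noteq> row j B"
    and "\<forall>x. V x = (\<chi> k. (\<Sum>i\<in>UNIV. A $ i $ k * x $ i) * (\<Sum>j\<in>UNIV. B $ j $ k * x $ j))"
    and "\<forall>i j. 0 \<le> C $ i $ j"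
    and "\<forall>k. (\<forall>i. (A *v column k C) $ i \<le> column k C $ i)
             \<or> (\<forall>i. (B *v column k C) $ i \<le> column k C $ i)"
    and "\<forall>k. 0 < p $ k"
  shows "lyapunov_fun (\<lambda>x. \<Prod>k\<in>UNIV. (\<Sum>i\<in>UNIV. C $ i $ k * x $ i) powr (p $ k)) V std_simplex"
proof -
  note Vdef = assms(9)
  have AB: "\<And>i j. (\<Sum>k\<in>UNIV. A $ i $ k * B $ j $ k) = 1"
  proof -
    fix i j
    have "(A ** transpose B) $ i $ j = 1" using assms(6) by simp
    thus "(\<Sum>k\<in>UNIV. A $ i $ k * B $ j $ k) = 1"
      by (simp add: matrix_matrix_mult_def transpose_def)
  qed
  define u where "u x k = (\<Sum>i\<in>UNIV. A $ i $ k * x $ i)" for x :: "real^'m" and k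
  define w where "w x k = (\<Sum>i\<in>UNIV. B $ i $ k * x $ i)" for x :: "real^'m" and k
  have Vc: "V x $ k = u x k * w x k" for x k using Vdef by (simp add: u_def w_def)
  have ub: "x \<in> std_simplex \<Longrightarrow> 0 \<le> u x k \<and> u x k \<le> 1" for x k
    unfolding u_def by (rule simplex_bounds[OF _ assms(2)])
  have wb: "x \<in> std_simplex \<Longrightarrow> 0 \<le> w x k \<and> w x k \<le> 1" for x k
    unfolding w_def by (rule simplex_bounds[OF _ assms(3)])
  have inv: "V x \<in> std_simplex" if x: "x \<in> std_simplex" for x
  proof -
    have x1: "(\<Sum>i\<in>UNIV. x $ i) = 1" using x by (auto simp: std_simplex_def)
    have "(\<Sum>k\<in>UNIV. V x $ k) = (\<Sum>k\<in>UNIV. \<Sum>i\<in>UNIV. \<Sum>j\<in>UNIV. x $ i * x $ j * (A $ i $ k * B $ j $ k))"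
      unfolding Vc u_def w_def sum_product by (intro sum.cong refl) (simp add: mult_ac)
    also have "\<dots> = (\<Sum>i\<in>UNIV. \<Sum>k\<in>UNIV. \<Sum>j\<in>UNIV. x $ i * x $ j * (A $ i $ k * B $ j $ k))"
      by (rule sum.swap)
    also have "\<dots> = (\<Sum>i\<in>UNIV. \<Sum>j\<in>UNIV. \<Sum>k\<in>UNIV. x $ i * x $ j * (A $ i $ k * B $ j $ k))"
      by (rule sum.cong[OF refl], rule sum.swap)
    also have "\<dots> = (\<Sum>i\<in>UNIV. \<Sum>j\<in>UNIV. x $ i * x $ j)"
      by (simp add: sum_distrib_left[symmetric] AB)
    also have "\<dots> = (\<Sum>i\<in>UNIV. x $ i) * (\<Sum>j\<in>UNIV. x $ j)"
      by (simp add: sum_product)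
    finally have "(\<Sum>k\<in>UNIV. V x $ k) = 1" using x1 by simp
    moreover have "\<forall>k. 0 \<le> V x $ k" using ub[OF x] wb[OF x] by (simp add: Vc)
    ultimately show ?thesis by (simp add: std_simplex_def)
  qed
  define f where "f x k = (\<Sum>i\<in>UNIV. C $ i $ k * x $ i)" for x :: "real^'m" and k
  have fnn: "x \<in> std_simplex \<Longrightarrow> 0 \<le> f x k" for x k
    unfolding f_def std_simplex_def using assms(10) by (auto intro!: sum_nonneg)
  have fdec: "f (V x) k \<le> f x k" if x: "x \<in> std_simplex" for x k
  proof -
    have x0: "\<forall>i. 0 \<le> x $ i" using x by (auto simp: std_simplex_def)
    have Ck: "\<And>i. C $ i $ k \<ge> 0" using assms(10) by simp
    from assms(11)[rule_format, of k] show ?thesis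
    proof
      assume H: "\<forall>i. (A *v column k C) $ i \<le> column k C $ i"
      have "f (V x) k \<le> (\<Sum>i\<in>UNIV. C $ i $ k * u x i)"
        unfolding f_def Vc
        by (rule sum_mono) (metis Ck ub[OF x] wb[OF x] mult_left_mono mult_right_mono mult_1_right mult.assoc mult_nonneg_nonneg)
      also have "\<dots> = (\<Sum>i\<in>UNIV. \<Sum>j\<in>UNIV. x $ j * (A $ j $ i * C $ i $ k))"
        unfolding u_def sum_distrib_left by (intro sum.cong refl) (simp add: mult_ac)
      also have "\<dots> = (\<Sum>j\<in>UNIV. \<Sum>i\<in>UNIV. x $ j * (A $ j $ i * C $ i $ k))"
        by (rule sum.swap)
      also have "\<dots> = (\<Sum>j\<in>UNIV. x $ j * (A *v column k C) $ j)"
        by (simp add: matrix_vector_mult_def column_def sum_distrib_left)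
      also have "\<dots> \<le> (\<Sum>j\<in>UNIV. x $ j * C $ j $ k)"
        by (rule sum_mono) (metis H x0 mult_left_mono column_def vec_lambda_beta)
      finally show ?thesis by (simp add: f_def mult.commute)
    next
      assume H: "\<forall>i. (B *v column k C) $ i \<le> column k C $ i"
      have "f (V x) k \<le> (\<Sum>i\<in>UNIV. C $ i $ k * w x i)"
        unfolding f_def Vc
        by (rule sum_mono) (metis Ck ub[OF x] wb[OF x] mult_left_mono mult_right_mono mult_1_left mult.assoc mult.commute mult_nonneg_nonneg)
      also have "\<dots> = (\<Sum>i\<in>UNIV. \<Sum>j\<in>UNIV. x $ j * (B $ j $ i * C $ i $ k))"
        unfolding w_def sum_distrib_left by (intro sum.cong refl) (simp add: mult_ac)
      also have "\<dots> = (\<Sum>j\<in>UNIV. \<Sum>i\<in>UNIV. x $ j * (B $ j $ i * C $ i $ k))"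
        by (rule sum.swap)
      also have "\<dots> = (\<Sum>j\<in>UNIV. x $ j * (B *v column k C) $ j)"
        by (simp add: matrix_vector_mult_def column_def sum_distrib_left)
      also have "\<dots> \<le> (\<Sum>j\<in>UNIV. x $ j * C $ j $ k)"
        by (rule sum_mono) (metis H x0 mult_left_mono column_def vec_lambda_beta)
      finally show ?thesis by (simp add: f_def mult.commute)
    qed
  qed
  define phi where "phi x = (\<Prod>k\<in>UNIV. f x k powr (p $ k))" for x
  have phidec: "phi (V x) \<le> phi x" if x: "x \<in> std_simplex" for x
    unfolding phi_def
    by (rule prod_mono) (use fnn[OF inv[OF x]] fdec[OF x] assms(12) in \<open>auto intro!: powr_mono2 simp: less_imp_le\<close>)
  have phinn: "0 \<le> phi x" for x unfolding phi_def by (auto intro: prod_nonneg)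
  have orb: "(V ^^ n) x \<in> std_simplex" if "x \<in> std_simplex" for x n
    by (induction n) (auto simp: that inv)
  have conv: "convergent (\<lambda>n. phi ((V ^^ n) x0))" if x0: "x0 \<in> std_simplex" for x0
  proof -
    have "decseq (\<lambda>n. phi ((V ^^ n) x0))"
      by (rule decseq_SucI) (simp add: phidec orb[OF x0])
    then show ?thesis
      using LIMSEQ_decseq_INF[of "\<lambda>n. phi ((V ^^ n) x0)"] phinn
      by (metis bdd_belowI2 convergent_def)
  qed
  have cont: "continuous_on std_simplex phi"
    unfolding phi_def f_def
    by (intro continuous_intros continuous_on_powr')
       (use assms(12) in \<open>auto simp: std_simplex_def intro!: sum_nonneg mult_nonneg_nonneg assms(10)[rule_format]\<close>)
  show ?thesis
    unfolding lyapunov_fun_def using cont conv by (simp add: phi_def f_def)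
qed

end
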